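(* Let $T$ be a non-star tree and $x$ a vertex of $T$ with neighbors $x_1,\dots,x_n$, $n\ge 2$. Suppose that for $i=1,\dots,p$, where $1\le p<n$, there exists a $(T_{(x_i,x)},x_i)$-well 2-placement. Let $T'$ be the connected component containing $x$ in $T-\{xx_i: i=1,\dots,p\}$. If there exists a $(T',z)$-well 2-placement $\sigma$ with $dist(x,\sigma(x))\le 3$, where $z$ is a vertex of $T'$, then there exists a $(T,z)$-well 2-placement $\sigma_z$ with $\sigma_z(v)=\sigma(v)$ for every $v\in V(T')$.
   Context: All graphs are finite, simple and undirected. A non-star tree is a tree not isomorphic to a star $K_{1,m}$ for any $m\ge0$. For an edge $ab$ of a tree $T$, $T_{(a,b)}$ denotes the connected component containing $a$ in $T-\{ab\}$. For a tree $S$, a permutation $\sigma$ of $V(S)$ is a 2-placement of $S$ if $\sigma(a)\sigma(b)\notin E(S)$ for every edge $ab\in E(S)$; $\sigma(S)\subseteq S^k$ means $dist_S(\sigma(a),\sigma(b))\le k$ for every edge $ab$ of $S$. For a non-star tree $S$ and vertex $w$, a fixed-point-free permutation $\sigma$ of $V(S)$ is an $(S,w)$-well 2-placement if (distances and degrees taken in $S$): (1) $\sigma$ is a 2-placement of $S$; (2) $\sigma(S)\subseteq S^6$; (3) $dist(w,\sigma(w))\le 2$; (4) $dist(y,\sigma(y))\le 3$ for every neighbor $y$ of $w$; (5) $dist(y,\sigma(y))\le 4$ for every $y$ of degree $1$; (6) every cycle of $\sigma$ (in its disjoint cycle decomposition) has length at most $5$. *)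

theory Defs
  imports Main
begin

type_synonym 'a graph = "'a set \<times> 'a set set"

definition verts :: "'a graph \<Rightarrow> 'a set" where "verts G = fst G"
definition edges :: "'a graph \<Rightarrow> 'a set set" where "edges G = snd G"

definition simple_graph :: "'a graph \<Rightarrow> bool" where
  "simple_graph G \<longleftrightarrow> finite (verts G) \<and>
     (\<forall>e\<in>edges G. \<exists>u v. u \<noteq> v \<and> e = {u, v} \<and> u \<in> verts G \<and> v \<in> verts G)"

definition adj :: "'a graph \<Rightarrow> 'a \<Rightarrow> 'a \<Rightarrow> bool" where
  "adj G u v \<longleftrightarrow> {u, v} \<in> edges G"

definition walk :: "'a graph \<Rightarrow> 'a list \<Rightarrow> bool" where
  "walk G xs \<longleftrightarrow> xs \<noteq> [] \<and> set xs \<subseteq> verts G \<and>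
     (\<forall>i. Suc i < length xs \<longrightarrow> adj G (xs ! i) (xs ! Suc i))"

definition reachable :: "'a graph \<Rightarrow> 'a \<Rightarrow> 'a \<Rightarrow> bool" where
  "reachable G u v \<longleftrightarrow> (\<exists>xs. walk G xs \<and> hd xs = u \<and> last xs = v)"

definition connected_graph :: "'a graph \<Rightarrow> bool" where
  "connected_graph G \<longleftrightarrow> verts G \<noteq> {} \<and> (\<forall>u\<in>verts G. \<forall>v\<in>verts G. reachable G u v)"

definition is_cycle :: "'a graph \<Rightarrow> 'a list \<Rightarrow> bool" where
  "is_cycle G xs \<longleftrightarrow> length xs \<ge> 3 \<and> distinct xs \<and> walk G xs \<and> adj G (last xs) (hd xs)"

definition tree :: "'a graph \<Rightarrow> bool" where
  "tree G \<longleftrightarrow> simple_graph G \<and> connected_graph G \<and> \<not> (\<exists>xs. is_cycle G xs)"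

definition gdist :: "'a graph \<Rightarrow> 'a \<Rightarrow> 'a \<Rightarrow> nat" where
  "gdist G u v = (LEAST n. \<exists>xs. walk G xs \<and> hd xs = u \<and> last xs = v \<and> length xs = Suc n)"

definition neighbors :: "'a graph \<Rightarrow> 'a \<Rightarrow> 'a set" where
  "neighbors G v = {u \<in> verts G. adj G v u}"

definition degree :: "'a graph \<Rightarrow> 'a \<Rightarrow> nat" where
  "degree G v = card (neighbors G v)"

definition component :: "'a graph \<Rightarrow> 'a \<Rightarrow> 'a graph" where
  "component G v = ({u. reachable G v u}, {e \<in> edges G. e \<subseteq> {u. reachable G v u}})"

definition delete_edges :: "'a graph \<Rightarrow> 'a set set \<Rightarrow> 'a graph" where
  "delete_edges G F = (verts G, edges G - F)"

definition is_star :: "'a graph \<Rightarrow> bool" where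
  "is_star G \<longleftrightarrow> (\<exists>c\<in>verts G. edges G = {{c, v} | v. v \<in> verts G \<and> v \<noteq> c})"

definition two_placement :: "'a graph \<Rightarrow> ('a \<Rightarrow> 'a) \<Rightarrow> bool" where
  "two_placement G \<sigma> \<longleftrightarrow> bij_betw \<sigma> (verts G) (verts G) \<and>
     (\<forall>a b. adj G a b \<longrightarrow> \<not> adj G (\<sigma> a) (\<sigma> b))"

definition well_2_placement :: "'a graph \<Rightarrow> 'a \<Rightarrow> ('a \<Rightarrow> 'a) \<Rightarrow> bool" where
  "well_2_placement S w \<sigma> \<longleftrightarrow>
     tree S \<and> \<not> is_star S \<and> w \<in> verts S \<and>
     (\<forall>v\<in>verts S. \<sigma> v \<noteq> v) \<and>
     two_placement S \<sigma> \<and>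
     (\<forall>a b. adj S a b \<longrightarrow> gdist S (\<sigma> a) (\<sigma> b) \<le> 6) \<and>
     gdist S w (\<sigma> w) \<le> 2 \<and>
     (\<forall>y\<in>neighbors S w. gdist S y (\<sigma> y) \<le> 3) \<and>
     (\<forall>y\<in>verts S. degree S y = 1 \<longrightarrow> gdist S y (\<sigma> y) \<le> 4) \<and>
     (\<forall>v\<in>verts S. \<exists>k\<in>{1..5}. (\<sigma> ^^ k) v = v)"

end

theory Submission
  imports Defs
begin


fun wk :: "'a graph \<Rightarrow> 'a list \<Rightarrow> bool" where
  "wk G [] = False"
| "wk G [u] = (u \<in> verts G)"
| "wk G (u # v # xs) = (u \<in> verts G \<and> adj G u v \<and> wk G (v # xs))"

lemma adj_sym: "adj G u v = adj G v u"
  unfolding adj_def by (simp add: insert_commute)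

lemma walk_Cons2: "walk G (u#v#xs) \<longleftrightarrow> u \<in> verts G \<and> adj G u v \<and> walk G (v#xs)"
proof -
  have "(\<forall>i. Suc i < length (u#v#xs) \<longrightarrow> adj G ((u#v#xs)!i) ((u#v#xs)!Suc i)) \<longleftrightarrow>
        adj G u v \<and> (\<forall>i. Suc i < length (v#xs) \<longrightarrow> adj G ((v#xs)!i) ((v#xs)!Suc i))"
    (is "?L \<longleftrightarrow> ?R")
  proof
    assume L: ?L
    have "adj G u v" using L[rule_format, of 0] by simp
    moreover have "\<forall>i. Suc i < length (v#xs) \<longrightarrow> adj G ((v#xs)!i) ((v#xs)!Suc i)"
      using L by (metis Suc_less_eq length_Cons nth_Cons_Suc)
    ultimately show ?R by simp
  next
    assume R: ?R
    show ?L
    proof (intro allI impI)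
      fix i assume "Suc i < length (u#v#xs)"
      then show "adj G ((u#v#xs)!i) ((u#v#xs)!Suc i)"
        using R by (cases i) auto
    qed
  qed
  then show ?thesis unfolding walk_def by auto
qed

lemma walk_wk: "walk G xs \<longleftrightarrow> wk G xs"
proof (induction G xs rule: wk.induct)
  case (1 G) then show ?case by (simp add: walk_def)
next
  case (2 G u) then show ?case by (simp add: walk_def)
next
  case (3 G u v xs) then show ?case by (simp add: walk_Cons2)
qed

lemma wk_set: "wk G ws \<Longrightarrow> set ws \<subseteq> verts G"
  by (induction G ws rule: wk.induct) auto

lemma wk_ne: "wk G ws \<Longrightarrow> ws \<noteq> []"
  by auto

lemma wk_append: "wk G (xs @ [y]) \<Longrightarrow> wk G (y # zs) \<Longrightarrow> wk G (xs @ y # zs)"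
proof (induction xs)
  case Nil then show ?case by simp
next
  case (Cons a xs)
  then show ?case by (cases xs) auto
qed

lemma wk_split: "wk G (xs @ y # zs) \<Longrightarrow> wk G (xs @ [y]) \<and> wk G (y # zs)"
proof (induction xs)
  case Nil then show ?case by (cases zs) auto
next
  case (Cons a xs)
  then show ?case by (cases xs) auto
qed

lemma wk_rev: "wk G ws \<Longrightarrow> wk G (rev ws)"
proof (induction G ws rule: wk.induct)
  case (3 G u v xs)
  then have "wk G (rev xs @ [v])" by auto
  moreover have "v \<in> verts G" using 3 wk_set by fastforce
  then have "wk G [v, u]" using 3 by (auto simp: adj_sym)
  ultimately
  have "wk G (rev xs @ v # [u])" by (rule wk_append)
  then show ?case by simp
qed auto

lemma wk_mono: "wk G ws \<Longrightarrow> verts G \<subseteq> verts H \<Longrightarrow> edges G \<subseteq> edges H \<Longrightarrow> wk H ws"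
  by (induction G ws rule: wk.induct) (auto simp: adj_def)

lemma reachable_wk: "reachable G u v \<longleftrightarrow> (\<exists>ws. wk G ws \<and> hd ws = u \<and> last ws = v)"
  unfolding reachable_def walk_wk ..

lemma reach_refl: "u \<in> verts G \<Longrightarrow> reachable G u u"
  unfolding reachable_wk by (rule exI[of _ "[u]"]) simp

lemma reach_verts: "reachable G u v \<Longrightarrow> u \<in> verts G \<and> v \<in> verts G"
  unfolding reachable_wk by (metis wk_set hd_in_set last_in_set subsetD wk_ne)

lemma reach_sym: "reachable G u v \<Longrightarrow> reachable G v u"
  unfolding reachable_wk by (metis wk_rev hd_rev last_rev)

lemma reach_trans: "reachable G u v \<Longrightarrow> reachable G v w \<Longrightarrow> reachable G u w"
proof -
  assume "reachable G u v" "reachable G v w"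
  then obtain xs ys where xs: "wk G xs" "hd xs = u" "last xs = v"
    and ys: "wk G ys" "hd ys = v" "last ys = w" unfolding reachable_wk by blast
  have e1: "xs = butlast xs @ [v]" using xs wk_ne by (metis append_butlast_last_id)
  have e2: "ys = v # tl ys" using ys wk_ne by (metis list.collapse)
  have "wk G (butlast xs @ v # tl ys)" using wk_append[of G "butlast xs" v "tl ys"] xs ys e1 e2 by metis
  moreover have "hd (butlast xs @ v # tl ys) = u" using xs e1 by (cases "butlast xs") auto
  moreover have "last (butlast xs @ v # tl ys) = w" using ys e2 by (metis last_ConsR last_appendR list.discI last.simps)
  ultimately show ?thesis unfolding reachable_wk by blast
qed

lemma reach_mono: "reachable G u v \<Longrightarrow> verts G \<subseteq> verts H \<Longrightarrow> edges G \<subseteq> edges H \<Longrightarrow> reachable H u v"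
  unfolding reachable_wk using wk_mono by blast

lemma reach_adj: "adj G u v \<Longrightarrow> u \<in> verts G \<Longrightarrow> v \<in> verts G \<Longrightarrow> reachable G u v"
  unfolding reachable_wk by (rule exI[of _ "[u,v]"]) simp

lemma path_exists: "wk G ws \<Longrightarrow> \<exists>ps. wk G ps \<and> distinct ps \<and> hd ps = hd ws \<and> last ps = last ws"
proof (induction "length ws" arbitrary: ws rule: less_induct)
  case less
  show ?case
  proof (cases "distinct ws")
    case True then show ?thesis using less by blast
  next
    case False
    then obtain as y bs cs where ws: "ws = as @ [y] @ bs @ [y] @ cs"
      using not_distinct_decomp by blast
    have w1: "wk G (as @ [y])" using wk_split[of G as y "bs @ [y] @ cs"] less ws by simp
    have w2: "wk G (y # cs)" using wk_split[of G "as @ y # bs" y cs] less ws by simp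
    have w: "wk G (as @ y # cs)" using wk_append[OF w1 w2] .
    have "length (as @ y # cs) < length ws" using ws by simp
    then obtain ps where "wk G ps \<and> distinct ps \<and> hd ps = hd (as @ y # cs) \<and> last ps = last (as @ y # cs)"
      using less w by blast
    moreover have "hd (as @ y # cs) = hd ws" using ws by (cases as) auto
    moreover have "last (as @ y # cs) = last ws" using ws by (cases cs) auto
    ultimately show ?thesis by metis
  qed
qed

lemma gdist_le: "wk G ws \<Longrightarrow> gdist G (hd ws) (last ws) \<le> length ws - 1"
  unfolding gdist_def walk_wk
  by (rule Least_le) (rule exI[of _ ws], cases ws, auto)

lemma gdist_ex: "reachable G u v \<Longrightarrow> \<exists>ws. wk G ws \<and> hd ws = u \<and> last ws = v \<and> length ws = Suc (gdist G u v)"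
proof -
  assume "reachable G u v"
  then obtain ws where ws: "wk G ws" "hd ws = u" "last ws = v" unfolding reachable_wk by blast
  then have "\<exists>n. \<exists>xs. walk G xs \<and> hd xs = u \<and> last xs = v \<and> length xs = Suc n"
    by (metis walk_wk wk_ne length_greater_0_conv Suc_pred)
  from LeastI_ex[OF this] show ?thesis unfolding gdist_def walk_wk .
qed

lemma gdist_mono: "reachable G u v \<Longrightarrow> verts G \<subseteq> verts H \<Longrightarrow> edges G \<subseteq> edges H \<Longrightarrow> gdist H u v \<le> gdist G u v"
proof -
  assume a: "reachable G u v" "verts G \<subseteq> verts H" "edges G \<subseteq> edges H"
  then obtain ws where ws: "wk G ws" "hd ws = u" "last ws = v" "length ws = Suc (gdist G u v)"
    using gdist_ex by metis
  then have "wk H ws" using wk_mono a by blast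
  then show ?thesis using gdist_le[of H ws] ws by simp
qed

lemma gdist_sym: "reachable G u v \<Longrightarrow> gdist G v u \<le> gdist G u v"
  using gdist_ex[of G u v] gdist_le[of G "rev _"] wk_rev
  by (metis hd_rev last_rev length_rev diff_Suc_1)

lemma gdist_adj: "adj G u v \<Longrightarrow> u \<in> verts G \<Longrightarrow> v \<in> verts G \<Longrightarrow> gdist G u v \<le> 1"
  using gdist_le[of G "[u,v]"] by simp

lemma gdist_tri: "reachable G u v \<Longrightarrow> reachable G v w \<Longrightarrow> gdist G u w \<le> gdist G u v + gdist G v w"
proof -
  assume "reachable G u v" "reachable G v w"
  then obtain xs ys where xs: "wk G xs" "hd xs = u" "last xs = v" "length xs = Suc (gdist G u v)"
    and ys: "wk G ys" "hd ys = v" "last ys = w" "length ys = Suc (gdist G v w)"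
    using gdist_ex by metis
  have e1: "xs = butlast xs @ [v]" using xs wk_ne by (metis append_butlast_last_id)
  have e2: "ys = v # tl ys" using ys wk_ne by (metis list.collapse)
  have "wk G (butlast xs @ v # tl ys)" using wk_append[of G "butlast xs" v "tl ys"] xs ys e1 e2 by metis
  moreover have "hd (butlast xs @ v # tl ys) = u" using xs e1 by (cases "butlast xs") auto
  moreover have "last (butlast xs @ v # tl ys) = w" using ys e2 by (metis last_ConsR last_appendR list.discI last.simps)
  ultimately have "gdist G u w \<le> length (butlast xs @ v # tl ys) - 1" using gdist_le by metis
  also have "\<dots> = gdist G u v + gdist G v w" using xs ys by simp
  finally show ?thesis .
qed



lemma adj_verts: "simple_graph G \<Longrightarrow> adj G a b \<Longrightarrow> a \<in> verts G \<and> b \<in> verts G \<and> a \<noteq> b"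
proof -
  assume "simple_graph G" "adj G a b"
  then obtain u v where "u \<noteq> v" "{a,b} = {u,v}" "u \<in> verts G" "v \<in> verts G"
    unfolding simple_graph_def adj_def by blast
  then show ?thesis by (auto simp: doubleton_eq_iff)
qed

lemma tree_reach: "tree S \<Longrightarrow> u \<in> verts S \<Longrightarrow> v \<in> verts S \<Longrightarrow> reachable S u v"
  unfolding tree_def connected_graph_def by blast

lemma verts_del[simp]: "verts (delete_edges T F) = verts T"
  and edges_del[simp]: "edges (delete_edges T F) = edges T - F"
  unfolding delete_edges_def verts_def edges_def by auto

lemma verts_comp: "verts (component G r) = {u. reachable G r u}"
  and edges_comp: "edges (component G r) = {e \<in> edges G. e \<subseteq> {u. reachable G r u}}"
  unfolding component_def verts_def edges_def by auto

lemma comp_sub: "verts (component (delete_edges T F) r) \<subseteq> verts T"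
  "edges (component (delete_edges T F) r) \<subseteq> edges T"
  unfolding verts_comp edges_comp using reach_verts by fastforce+

lemma adj_comp: "a \<in> verts (component (delete_edges T F) r) \<Longrightarrow> b \<in> verts (component (delete_edges T F) r)
   \<Longrightarrow> adj T a b \<Longrightarrow> {a,b} \<notin> F \<Longrightarrow> adj (component (delete_edges T F) r) a b"
  unfolding adj_def verts_comp edges_comp by auto

lemma adj_comp2: "adj (component (delete_edges T F) r) a b \<Longrightarrow> adj T a b"
  unfolding adj_def using comp_sub(2)[of T F r] by blast

lemma acyc:
  assumes "tree T" "adj T x y" "{x,y} \<in> F"
  shows "\<not> reachable (delete_edges T F) x y"
proof
  assume "reachable (delete_edges T F) x y"
  then obtain ws where "wk (delete_edges T F) ws" "hd ws = x" "last ws = y" by (auto simp: reachable_wk)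
  then obtain ps where ps: "wk (delete_edges T F) ps" "distinct ps" "hd ps = x" "last ps = y"
    using path_exists by metis
  have sg: "simple_graph T" using assms(1) by (simp add: tree_def)
  have xy: "x \<noteq> y" using adj_verts[OF sg assms(2)] by simp
  have "ps \<noteq> []" using ps by auto
  then consider (1) "length ps = 1" | (2) "length ps = 2" | (3) "length ps \<ge> 3"
  proof -
    have "length ps \<noteq> 0" using \<open>ps \<noteq> []\<close> by simp
    then show "\<And>thesis. (length ps = 1 \<Longrightarrow> thesis) \<Longrightarrow> (length ps = 2 \<Longrightarrow> thesis) \<Longrightarrow> (3 \<le> length ps \<Longrightarrow> thesis) \<Longrightarrow> thesis"
      by linarith
  qed
  then show False
  proof cases
    case 1 then obtain a where "ps = [a]" by (auto simp: length_Suc_conv)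
    then show False using ps xy by simp
  next
    case 2 then obtain a b where "ps = [a,b]" by (auto simp: length_Suc_conv numeral_2_eq_2)
    then show False using ps assms(3) by (auto simp: adj_def)
  next
    case 3
    have "wk T ps" using wk_mono[OF ps(1)] by auto
    moreover have "adj T (last ps) (hd ps)" using ps(3,4) assms(2) by (simp add: adj_sym)
    ultimately have "is_cycle T ps" using 3 ps(2) unfolding is_cycle_def walk_wk by simp
    then show False using assms(1) unfolding tree_def by auto
  qed
qed

lemma wk_avoid: "wk (delete_edges T F) ws \<Longrightarrow> x \<notin> set ws \<Longrightarrow> wk (delete_edges T {e. x \<in> e}) ws"
proof (induction "delete_edges T F" ws rule: wk.induct)
  case (3 u v xs)
  then show ?case by (auto simp: adj_def)
qed auto

lemma wk_prop: "(\<And>a b. Q a \<Longrightarrow> adj G a b \<Longrightarrow> Q b) \<Longrightarrow> wk G ws \<Longrightarrow> Q (hd ws) \<Longrightarrow> Q (last ws)"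
  by (induction G ws rule: wk.induct) auto

lemma funpow_agree: "(\<And>u. u \<in> A \<Longrightarrow> f u = g u) \<Longrightarrow> (\<And>u. u \<in> A \<Longrightarrow> g u \<in> A) \<Longrightarrow> v \<in> A
  \<Longrightarrow> (f^^k) v = (g^^k) v \<and> (g^^k) v \<in> A"
  by (induction k) auto



theorem lemma3p4:
  fixes T T' :: "'a graph" and x z :: 'a and P :: "'a set" and \<sigma> :: "'a \<Rightarrow> 'a"
  assumes "tree T" and "\<not> is_star T" and "x \<in> verts T"
    and "card (neighbors T x) \<ge> 2"
    and "P \<subseteq> neighbors T x" and "1 \<le> card P" and "card P < card (neighbors T x)"
    and "\<forall>y\<in>P. \<exists>\<tau>. well_2_placement (component (delete_edges T {{x, y}}) y) y \<tau>"
    and "T' = component (delete_edges T ((\<lambda>y. {x, y}) ` P)) x"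
    and "z \<in> verts T'"
    and "well_2_placement T' z \<sigma>"
    and "gdist T' x (\<sigma> x) \<le> 3"
  shows "\<exists>\<sigma>z. well_2_placement T z \<sigma>z \<and> (\<forall>v\<in>verts T'. \<sigma>z v = \<sigma> v)"
proof -
  define FP where "FP = (\<lambda>y. {x, y}) ` P"
  define D where "D = delete_edges T FP"
  define Dy where "Dy = (\<lambda>y. delete_edges T {{x, y}})"
  define Ty where "Ty = (\<lambda>y. component (Dy y) y)"
  define G0 where "G0 = delete_edges T {e. x \<in> e}"
  have T': "T' = component D x" using assms(9) unfolding D_def FP_def by simp
  obtain \<tau> where \<tau>0: "\<forall>y\<in>P. well_2_placement (component (delete_edges T {{x, y}}) y) y (\<tau> y)"
    using bchoice[OF assms(8)] by (elim exE)
  have \<tau>: "\<forall>y\<in>P. well_2_placement (Ty y) y (\<tau> y)" using \<tau>0 unfolding Ty_def Dy_def by simp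
  have sg: "simple_graph T" using assms(1) unfolding tree_def by blast
  have connT: "\<And>u v. u \<in> verts T \<Longrightarrow> v \<in> verts T \<Longrightarrow> reachable T u v"
    using tree_reach[OF assms(1)] .
  have adjP: "\<And>y. y \<in> P \<Longrightarrow> adj T x y \<and> y \<in> verts T \<and> y \<noteq> x"
  proof -
    fix y assume "y \<in> P"
    then have "y \<in> verts T \<and> adj T x y" using assms(5) unfolding neighbors_def by blast
    then show "adj T x y \<and> y \<in> verts T \<and> y \<noteq> x" using adj_verts[OF sg, of x y] by auto
  qed
  have vT': "verts T' = {u. reachable D x u}" using T' verts_comp by simp
  have vTy: "\<And>y. verts (Ty y) = {u. reachable (Dy y) y u}" unfolding Ty_def verts_comp by simp
  have subT': "verts T' \<subseteq> verts T" "edges T' \<subseteq> edges T"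
    using comp_sub[of T FP x] unfolding T' D_def by simp_all
  have subTy: "\<And>y. verts (Ty y) \<subseteq> verts T" "\<And>y. edges (Ty y) \<subseteq> edges T"
    unfolding Ty_def Dy_def by (rule comp_sub(1), rule comp_sub(2))
  have "x \<in> verts D" using assms(3) D_def by simp
  then have xT': "x \<in> verts T'" unfolding vT' using reach_refl[of x D] by blast
  have yTy: "\<And>y. y \<in> P \<Longrightarrow> y \<in> verts (Ty y)"
  proof -
    fix y assume "y \<in> P"
    then have "y \<in> verts (Dy y)" using adjP[of y] unfolding Dy_def by simp
    then show "y \<in> verts (Ty y)" unfolding vTy using reach_refl[of y "Dy y"] by blast
  qed
  have dis_a: "\<And>y. y \<in> P \<Longrightarrow> y \<notin> verts T'"
  proof
    fix y assume y: "y \<in> P" "y \<in> verts T'"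
    have "\<not> reachable D x y" unfolding D_def
      by (rule acyc[OF assms(1)]) (use adjP y FP_def in auto)
    then show False using y vT' by simp
  qed
  have dis_x: "\<And>y. y \<in> P \<Longrightarrow> x \<notin> verts (Ty y)"
  proof
    fix y assume y: "y \<in> P" "x \<in> verts (Ty y)"
    have "\<not> reachable (Dy y) x y" unfolding Dy_def
      by (rule acyc[OF assms(1)]) (use adjP y in auto)
    moreover have "reachable (Dy y) y x" using y(2) unfolding vTy by simp
    ultimately show False using reach_sym[of "Dy y" y x] by blast
  qed
  have dis_b: "\<And>y v. y \<in> P \<Longrightarrow> v \<in> verts (Ty y) \<Longrightarrow> v \<notin> verts T'"
  proof
    fix y v assume y: "y \<in> P" "v \<in> verts (Ty y)" "v \<in> verts T'"
    have "reachable D x v" using y vT' by simp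
    then have "reachable (Dy y) x v"
      by (rule reach_mono) (use y in \<open>auto simp: D_def Dy_def FP_def\<close>)
    moreover have "reachable (Dy y) v y" using y(2) reach_sym[of "Dy y" y v] unfolding vTy by simp
    ultimately have "reachable (Dy y) x y" by (rule reach_trans)
    moreover have "\<not> reachable (Dy y) x y" unfolding Dy_def
      by (rule acyc[OF assms(1)]) (use adjP y in auto)
    ultimately show False by blast
  qed
  have noX: "\<And>y v. y \<in> P \<Longrightarrow> reachable (Dy y) y v \<Longrightarrow> reachable G0 y v"
  proof -
    fix y v assume y: "y \<in> P" "reachable (Dy y) y v"
    then obtain ws where ws: "wk (Dy y) ws" "hd ws = y" "last ws = v" by (auto simp: reachable_wk)
    have "x \<notin> set ws"
    proof
      assume "x \<in> set ws"
      then obtain as bs where "ws = as @ x # bs" by (meson split_list)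
      then have w: "wk (Dy y) (as @ [x])" using wk_split[of "Dy y" as x bs] ws(1) by simp
      have "hd (as @ [x]) = y" using ws(2) \<open>ws = as @ x # bs\<close> by (cases as) auto
      then have "reachable (Dy y) y x" unfolding reachable_wk using w by (intro exI[of _ "as @ [x]"]) simp
      then show False using dis_x[OF y(1)] unfolding vTy by simp
    qed
    then have "wk G0 ws" using wk_avoid[of T "{{x,y}}" ws x] ws(1) unfolding Dy_def G0_def by blast
    then show "reachable G0 y v" using ws unfolding reachable_wk by blast
  qed
  have dis_c: "\<And>y y' v. y \<in> P \<Longrightarrow> y' \<in> P \<Longrightarrow> y \<noteq> y' \<Longrightarrow> v \<in> verts (Ty y) \<Longrightarrow> v \<notin> verts (Ty y')"
  proof
    fix y y' v assume y: "y \<in> P" "y' \<in> P" "y \<noteq> y'" "v \<in> verts (Ty y)" "v \<in> verts (Ty y')"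
    have "reachable G0 y v" "reachable G0 y' v" using noX[of y v] noX[of y' v] y unfolding vTy by auto
    then have "reachable G0 y y'" using reach_sym[of G0 y' v] reach_trans[of G0 y v y'] by blast
    then have "reachable (Dy y') y y'"
      by (rule reach_mono) (auto simp: G0_def Dy_def)
    moreover have "adj (Dy y') x y" using adjP[OF y(1)] adjP[OF y(2)] y(3)
      by (auto simp: Dy_def adj_def doubleton_eq_iff)
    then have "reachable (Dy y') x y" using reach_adj[of "Dy y'" x y] adjP[OF y(1)] assms(3) unfolding Dy_def by simp
    ultimately have "reachable (Dy y') x y'" using reach_trans[of "Dy y'" x y y'] by blast
    moreover have "\<not> reachable (Dy y') x y'" unfolding Dy_def
      by (rule acyc[OF assms(1)]) (use adjP y in auto)
    ultimately show False by blast
  qed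
  have cls1: "\<And>a b. a \<in> verts T' \<Longrightarrow> adj T a b \<Longrightarrow> b \<in> verts T' \<and> {a,b} \<notin> FP \<or> (a = x \<and> b \<in> P)"
  proof -
    fix a b assume ab: "a \<in> verts T'" "adj T a b"
    show "b \<in> verts T' \<and> {a,b} \<notin> FP \<or> (a = x \<and> b \<in> P)"
    proof (cases "{a,b} \<in> FP")
      case True
      then obtain y where y: "y \<in> P" "{a,b} = {x,y}" unfolding FP_def by blast
      then have "a = x \<and> b = y \<or> a = y" by (auto simp: doubleton_eq_iff)
      then show ?thesis using dis_a y ab by blast
    next
      case False
      then have "adj D a b" using ab unfolding D_def adj_def by simp
      moreover have "b \<in> verts D" using adj_verts[OF sg ab(2)] D_def by simp
      moreover have "a \<in> verts D" using adj_verts[OF sg ab(2)] D_def by simp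
      ultimately have "reachable D a b" using reach_adj[of D a b] by blast
      then have "reachable D x b" using ab(1) reach_trans[of D x a b] unfolding vT' by blast
      then show ?thesis using vT' False by simp
    qed
  qed
  have cls2: "\<And>y a b. y \<in> P \<Longrightarrow> a \<in> verts (Ty y) \<Longrightarrow> adj T a b \<Longrightarrow> b \<in> verts (Ty y) \<and> {a,b} \<noteq> {x,y} \<or> (a = y \<and> b = x)"
  proof -
    fix y a b assume ab: "y \<in> P" "a \<in> verts (Ty y)" "adj T a b"
    show "b \<in> verts (Ty y) \<and> {a,b} \<noteq> {x,y} \<or> (a = y \<and> b = x)"
    proof (cases "{a,b} = {x,y}")
      case True
      then have "a = x \<and> b = y \<or> a = y \<and> b = x" by (auto simp: doubleton_eq_iff)
      then show ?thesis using dis_x ab by blast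
    next
      case False
      then have "adj (Dy y) a b" using ab unfolding Dy_def adj_def by simp
      moreover have "b \<in> verts (Dy y)" using adj_verts[OF sg ab(3)] Dy_def by simp
      moreover have "a \<in> verts (Dy y)" using adj_verts[OF sg ab(3)] Dy_def by simp
      ultimately have "reachable (Dy y) a b" using reach_adj[of "Dy y" a b] by blast
      then have "reachable (Dy y) y b" using ab(2) reach_trans[of "Dy y" y a b] unfolding vTy by blast
      then show ?thesis using vTy False by simp
    qed
  qed
  define Q where "Q = (\<lambda>v. v \<in> verts T' \<or> (\<exists>y\<in>P. v \<in> verts (Ty y)))"
  have Qstep: "\<And>a b. Q a \<Longrightarrow> adj T a b \<Longrightarrow> Q b"
  proof -
    fix a b assume q: "Q a" "adj T a b"
    show "Q b" using q(1) unfolding Q_def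
    proof (elim disjE bexE)
      assume "a \<in> verts T'"
      then have "b \<in> verts T' \<or> b \<in> P" using cls1 q(2) by blast
      then show "b \<in> verts T' \<or> (\<exists>y\<in>P. b \<in> verts (Ty y))" using yTy by blast
    next
      fix y assume "y \<in> P" "a \<in> verts (Ty y)"
      then have "b \<in> verts (Ty y) \<or> b = x" using cls2 q(2) by blast
      then show "b \<in> verts T' \<or> (\<exists>y\<in>P. b \<in> verts (Ty y))" using xT' \<open>y \<in> P\<close> by blast
    qed
  qed
  have cover: "\<And>v. v \<in> verts T \<Longrightarrow> Q v"
  proof -
    fix v assume "v \<in> verts T"
    then obtain ws where "wk T ws" "hd ws = x" "last ws = v" using connT[OF assms(3)] unfolding reachable_wk by blast
    moreover have "Q x" using xT' Q_def by blast
    ultimately show "Q v" using wk_prop[of Q T ws] Qstep by blast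
  qed
  define \<sigma>z where "\<sigma>z = (\<lambda>v. if v \<in> verts T' then \<sigma> v else \<tau> (SOME y. y \<in> P \<and> v \<in> verts (Ty y)) v)"
  have sz1: "\<And>v. v \<in> verts T' \<Longrightarrow> \<sigma>z v = \<sigma> v" unfolding \<sigma>z_def by simp
  have sz2: "\<And>y v. y \<in> P \<Longrightarrow> v \<in> verts (Ty y) \<Longrightarrow> \<sigma>z v = \<tau> y v"
  proof -
    fix y v assume y: "y \<in> P" "v \<in> verts (Ty y)"
    have "(SOME y. y \<in> P \<and> v \<in> verts (Ty y)) = y"
      by (rule some_equality) (use y dis_c in blast)+
    then show "\<sigma>z v = \<tau> y v" unfolding \<sigma>z_def using dis_b y by simp
  qed
  have W: "tree T'" "\<forall>v\<in>verts T'. \<sigma> v \<noteq> v" "bij_betw \<sigma> (verts T') (verts T')"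
    "\<forall>a b. adj T' a b \<longrightarrow> \<not> adj T' (\<sigma> a) (\<sigma> b)"
    "\<forall>a b. adj T' a b \<longrightarrow> gdist T' (\<sigma> a) (\<sigma> b) \<le> 6"
    "gdist T' z (\<sigma> z) \<le> 2" "\<forall>y\<in>neighbors T' z. gdist T' y (\<sigma> y) \<le> 3"
    "\<forall>y\<in>verts T'. degree T' y = 1 \<longrightarrow> gdist T' y (\<sigma> y) \<le> 4"
    "\<forall>v\<in>verts T'. \<exists>k\<in>{1..5}. (\<sigma> ^^ k) v = v"
    using assms(11) unfolding well_2_placement_def two_placement_def by simp_all
  have WT: "\<And>y. y \<in> P \<Longrightarrow> tree (Ty y) \<and> (\<forall>v\<in>verts (Ty y). \<tau> y v \<noteq> v) \<and> bij_betw (\<tau> y) (verts (Ty y)) (verts (Ty y)) \<and>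
    (\<forall>a b. adj (Ty y) a b \<longrightarrow> \<not> adj (Ty y) (\<tau> y a) (\<tau> y b)) \<and>
    (\<forall>a b. adj (Ty y) a b \<longrightarrow> gdist (Ty y) (\<tau> y a) (\<tau> y b) \<le> 6) \<and>
    gdist (Ty y) y (\<tau> y y) \<le> 2 \<and>
    (\<forall>u\<in>verts (Ty y). degree (Ty y) u = 1 \<longrightarrow> gdist (Ty y) u (\<tau> y u) \<le> 4) \<and>
    (\<forall>v\<in>verts (Ty y). \<exists>k\<in>{1..5}. (\<tau> y ^^ k) v = v)"
  proof -
    fix y assume "y \<in> P"
    then have "well_2_placement (Ty y) y (\<tau> y)" using \<tau> by blast
    then show "?thesis y" unfolding well_2_placement_def two_placement_def by simp
  qed
  have smap: "\<And>v. v \<in> verts T' \<Longrightarrow> \<sigma> v \<in> verts T'" using bij_betwE[OF W(3)] by blast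
  have tmap: "\<And>y v. y \<in> P \<Longrightarrow> v \<in> verts (Ty y) \<Longrightarrow> \<tau> y v \<in> verts (Ty y)"
  proof -
    fix y v assume "y \<in> P" "v \<in> verts (Ty y)"
    then show "\<tau> y v \<in> verts (Ty y)" using WT[of y] bij_betwE[of "\<tau> y" "verts (Ty y)" "verts (Ty y)"] by blast
  qed
  have adjT': "\<And>u w. u \<in> verts T' \<Longrightarrow> w \<in> verts T' \<Longrightarrow> adj T u w \<longleftrightarrow> adj T' u w"
  proof -
    fix u w assume uw: "u \<in> verts T'" "w \<in> verts T'"
    show "adj T u w \<longleftrightarrow> adj T' u w"
    proof
      assume a: "adj T u w"
      have "{u,w} \<notin> FP" using cls1[OF uw(1) a] uw dis_a by blast
      then show "adj T' u w" using adj_comp[of u T FP x w] uw a T' D_def by simp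
    next
      assume "adj T' u w" then show "adj T u w" using adj_comp2[of T FP x u w] unfolding T' D_def by blast
    qed
  qed
  have adjTy: "\<And>y u w. y \<in> P \<Longrightarrow> u \<in> verts (Ty y) \<Longrightarrow> w \<in> verts (Ty y) \<Longrightarrow> adj T u w \<longleftrightarrow> adj (Ty y) u w"
  proof -
    fix y u w assume uw: "y \<in> P" "u \<in> verts (Ty y)" "w \<in> verts (Ty y)"
    show "adj T u w \<longleftrightarrow> adj (Ty y) u w"
    proof
      assume a: "adj T u w"
      have "{u,w} \<noteq> {x,y}" using uw dis_x by (auto simp: doubleton_eq_iff)
      then show "adj (Ty y) u w" using adj_comp[of u T "{{x,y}}" y w] uw a unfolding Ty_def Dy_def by simp
    next
      assume "adj (Ty y) u w" then show "adj T u w" using adj_comp2[of T "{{x,y}}" y u w] unfolding Ty_def Dy_def by blast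
    qed
  qed
  have gT': "\<And>u w. u \<in> verts T' \<Longrightarrow> w \<in> verts T' \<Longrightarrow> gdist T u w \<le> gdist T' u w"
    using gdist_mono[OF tree_reach[OF W(1)] subT'] by blast
  have gTy: "\<And>y u w. y \<in> P \<Longrightarrow> u \<in> verts (Ty y) \<Longrightarrow> w \<in> verts (Ty y) \<Longrightarrow> gdist T u w \<le> gdist (Ty y) u w"
  proof -
    fix y u w assume a: "y \<in> P" "u \<in> verts (Ty y)" "w \<in> verts (Ty y)"
    have "reachable (Ty y) u w" using tree_reach[of "Ty y" u w] WT[OF a(1)] a by blast
    then show "gdist T u w \<le> gdist (Ty y) u w" using gdist_mono[of "Ty y" u w T] subTy[of y] by blast
  qed
  have gsym: "\<And>u w. u \<in> verts T \<Longrightarrow> w \<in> verts T \<Longrightarrow> gdist T w u \<le> gdist T u w"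
    using gdist_sym[OF connT] by blast
  have cross: "\<And>y. y \<in> P \<Longrightarrow> gdist T (\<sigma> x) (\<tau> y y) \<le> 6 \<and> gdist T (\<tau> y y) (\<sigma> x) \<le> 6"
  proof -
    fix y assume y: "y \<in> P"
    have v1: "\<sigma> x \<in> verts T" using smap xT' subT' by blast
    have v2: "\<tau> y y \<in> verts T" using tmap[OF y yTy[OF y]] subTy by blast
    have yv: "y \<in> verts T" using adjP y by blast
    have "gdist T (\<sigma> x) (\<tau> y y) \<le> gdist T (\<sigma> x) x + gdist T x (\<tau> y y)"
      using gdist_tri[OF connT[OF v1 assms(3)] connT[OF assms(3) v2]] by blast
    also have "gdist T x (\<tau> y y) \<le> gdist T x y + gdist T y (\<tau> y y)"
      using gdist_tri[OF connT[OF assms(3) yv] connT[OF yv v2]] by blast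
    also have "gdist T x y \<le> 1" using gdist_adj[of T x y] adjP[OF y] assms(3) by blast
    also have "gdist T y (\<tau> y y) \<le> 2" using gTy[OF y yTy[OF y] tmap[OF y yTy[OF y]]] WT[OF y] by linarith
    also have "gdist T (\<sigma> x) x \<le> 3" using gsym[OF assms(3) v1] gT'[OF xT' smap[OF xT']] assms(12) by linarith
    finally have A: "gdist T (\<sigma> x) (\<tau> y y) \<le> 6" by simp
    then show "gdist T (\<sigma> x) (\<tau> y y) \<le> 6 \<and> gdist T (\<tau> y y) (\<sigma> x) \<le> 6"
      using gsym[OF v1 v2] by linarith
  qed
  have crossadj: "\<And>a b. a \<in> verts T' \<Longrightarrow> b \<notin> verts T' \<Longrightarrow> adj T a b \<Longrightarrow> a = x \<and> b \<in> P"
    using cls1 by blast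
  have ff: "\<forall>v\<in>verts T. \<sigma>z v \<noteq> v"
  proof
    fix v assume "v \<in> verts T"
    then have "Q v" by (rule cover)
    then show "\<sigma>z v \<noteq> v" unfolding Q_def using sz1 sz2 W(2) WT by metis
  qed
  have inj: "inj_on \<sigma>z (verts T)"
  proof
    fix a b assume ab: "a \<in> verts T" "b \<in> verts T" "\<sigma>z a = \<sigma>z b"
    have Qa: "Q a" "Q b" using cover ab by auto
    show "a = b"
    proof (cases "a \<in> verts T'")
      case aT: True
      show ?thesis
      proof (cases "b \<in> verts T'")
        case True then show ?thesis using aT ab sz1 W(3) unfolding bij_betw_def inj_on_def by metis
      next
        case False
        then obtain y where y: "y \<in> P" "b \<in> verts (Ty y)" using Qa Q_def by blast
        then have "\<sigma>z b \<in> verts (Ty y)" using sz2 tmap by metis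
        moreover have "\<sigma>z a \<in> verts T'" using aT sz1 smap by metis
        ultimately show ?thesis using ab dis_b y by metis
      qed
    next
      case aT: False
      then obtain y where y: "y \<in> P" "a \<in> verts (Ty y)" using Qa Q_def by blast
      have sa: "\<sigma>z a \<in> verts (Ty y)" using y sz2 tmap by metis
      show ?thesis
      proof (cases "b \<in> verts T'")
        case True
        then have "\<sigma>z b \<in> verts T'" using sz1 smap by metis
        then show ?thesis using sa ab dis_b y by metis
      next
        case False
        then obtain y' where y': "y' \<in> P" "b \<in> verts (Ty y')" using Qa Q_def by blast
        have sb: "\<sigma>z b \<in> verts (Ty y')" using y' sz2 tmap by metis
        have "y = y'" using dis_c y y' sa sb ab by metis
        then show ?thesis using y y' ab sz2 WT[OF y(1)] unfolding bij_betw_def inj_on_def by metis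
      qed
    qed
  qed
  have img: "\<sigma>z ` verts T = verts T"
  proof
    show "\<sigma>z ` verts T \<subseteq> verts T"
    proof
      fix w assume "w \<in> \<sigma>z ` verts T"
      then obtain v where v: "v \<in> verts T" "w = \<sigma>z v" by blast
      then have "Q v" using cover by blast
      then show "w \<in> verts T"
      proof (unfold Q_def, elim disjE bexE)
        assume "v \<in> verts T'"
        then have "w \<in> verts T'" using v(2) sz1[of v] smap[of v] by simp
        then show ?thesis using subT'(1) by blast
      next
        fix y assume y: "y \<in> P" "v \<in> verts (Ty y)"
        then have "w \<in> verts (Ty y)" using v(2) sz2[of y v] tmap[of y v] by simp
        then show ?thesis using subTy(1)[of y] by blast
      qed
    qed
    show "verts T \<subseteq> \<sigma>z ` verts T"
    proof
      fix w assume w: "w \<in> verts T"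
      then have "Q w" using cover by blast
      then show "w \<in> \<sigma>z ` verts T"
      proof (unfold Q_def, elim disjE bexE)
        assume "w \<in> verts T'"
        then obtain v where v: "v \<in> verts T'" "w = \<sigma> v" using W(3) unfolding bij_betw_def by blast
        then have "w = \<sigma>z v" "v \<in> verts T" using sz1[of v] subT'(1) by auto
        then show ?thesis by blast
      next
        fix y assume y: "y \<in> P" "w \<in> verts (Ty y)"
        have "\<tau> y ` verts (Ty y) = verts (Ty y)" using WT[OF y(1)] unfolding bij_betw_def by blast
        then obtain v where v: "v \<in> verts (Ty y)" "w = \<tau> y v" using y(2) by blast
        then have "w = \<sigma>z v" "v \<in> verts T" using sz2[of y v] y(1) subTy(1)[of y] by auto
        then show ?thesis by blast
      qed
    qed
  qed
  have place: "\<forall>a b. adj T a b \<longrightarrow> \<not> adj T (\<sigma>z a) (\<sigma>z b) \<and> gdist T (\<sigma>z a) (\<sigma>z b) \<le> 6"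
  proof (intro allI impI)
    fix a b assume ab: "adj T a b"
    have "a \<in> verts T" using adj_verts[OF sg ab] by blast
    then have "Q a" by (rule cover)
    then show "\<not> adj T (\<sigma>z a) (\<sigma>z b) \<and> gdist T (\<sigma>z a) (\<sigma>z b) \<le> 6"
    proof (unfold Q_def, elim disjE bexE)
      assume aT: "a \<in> verts T'"
      show ?thesis
      proof (cases "b \<in> verts T'")
        case True
        have e: "\<sigma>z a = \<sigma> a" "\<sigma>z b = \<sigma> b" using sz1 aT True by auto
        have adj': "adj T' a b" using adjT'[OF aT True] ab by blast
        have m: "\<sigma> a \<in> verts T'" "\<sigma> b \<in> verts T'" using smap aT True by auto
        have "\<not> adj T' (\<sigma> a) (\<sigma> b)" using W(4) adj' by blast
        then have n: "\<not> adj T (\<sigma> a) (\<sigma> b)" using adjT'[OF m] by simp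
        have "gdist T' (\<sigma> a) (\<sigma> b) \<le> 6" using W(5) adj' by blast
        then have "gdist T (\<sigma> a) (\<sigma> b) \<le> 6" using gT'[OF m] by linarith
        then show ?thesis using n e by simp
      next
        case False
        then have xb: "a = x" "b \<in> P" using crossadj aT ab by auto
        have e: "\<sigma>z a = \<sigma> x" "\<sigma>z b = \<tau> b b" using sz1 sz2 xb aT yTy by auto
        have "\<not> adj T (\<sigma> x) (\<tau> b b)"
        proof
          assume c: "adj T (\<sigma> x) (\<tau> b b)"
          have "\<tau> b b \<notin> verts T'" using dis_b[OF xb(2) tmap[OF xb(2) yTy[OF xb(2)]]] .
          then have "\<sigma> x = x" using crossadj[OF smap[OF xT'] _ c] by blast
          then show False using W(2) xT' by blast
        qed
        then show ?thesis using e cross xb by simp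
      qed
    next
      fix y assume y: "y \<in> P" and aT: "a \<in> verts (Ty y)"
      show ?thesis
      proof (cases "b \<in> verts (Ty y)")
        case True
        have e: "\<sigma>z a = \<tau> y a" "\<sigma>z b = \<tau> y b" using sz2 y aT True by auto
        have adj': "adj (Ty y) a b" using adjTy[OF y aT True] ab by blast
        have m: "\<tau> y a \<in> verts (Ty y)" "\<tau> y b \<in> verts (Ty y)" using tmap y aT True by auto
        have "\<not> adj (Ty y) (\<tau> y a) (\<tau> y b)" using WT[OF y] adj' by blast
        then have n: "\<not> adj T (\<tau> y a) (\<tau> y b)" using adjTy[OF y m] by simp
        have "gdist (Ty y) (\<tau> y a) (\<tau> y b) \<le> 6" using WT[OF y] adj' by blast
        then have "gdist T (\<tau> y a) (\<tau> y b) \<le> 6" using gTy[OF y m] by linarith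
        then show ?thesis using n e by simp
      next
        case False
        then have xb: "a = y" "b = x" using cls2[OF y aT ab] by auto
        have e: "\<sigma>z a = \<tau> y y" "\<sigma>z b = \<sigma> x" using sz1 sz2 xb xT' y yTy by auto
        have "\<not> adj T (\<sigma> x) (\<tau> y y)"
        proof
          assume c: "adj T (\<sigma> x) (\<tau> y y)"
          have "\<tau> y y \<notin> verts T'" using dis_b[OF y tmap[OF y yTy[OF y]]] .
          then have "\<sigma> x = x" using crossadj[OF smap[OF xT'] _ c] by blast
          then show False using W(2) xT' by blast
        qed
        then have "\<not> adj T (\<tau> y y) (\<sigma> x)" using adj_sym[of T "\<tau> y y" "\<sigma> x"] by simp
        then show ?thesis using e cross[OF y] by simp
      qed
    qed
  qed
  have zT: "z \<in> verts T" using assms(10) subT' by blast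
  have nb: "\<forall>y\<in>neighbors T z. gdist T y (\<sigma>z y) \<le> 3"
  proof
    fix u assume "u \<in> neighbors T z"
    then have u: "adj T z u" "u \<in> verts T" unfolding neighbors_def by auto
    show "gdist T u (\<sigma>z u) \<le> 3"
    proof (cases "u \<in> verts T'")
      case True
      then have "u \<in> neighbors T' z" using adjT'[OF assms(10) True] u unfolding neighbors_def by blast
      then have "gdist T' u (\<sigma> u) \<le> 3" using W(7) by blast
      then show ?thesis using gT'[OF True smap[OF True]] sz1[OF True] by simp
    next
      case False
      then have uP: "u \<in> P" using crossadj[OF assms(10) False u(1)] by blast
      have "gdist (Ty u) u (\<tau> u u) \<le> 2" using WT[OF uP] by blast
      then show ?thesis using gTy[OF uP yTy[OF uP] tmap[OF uP yTy[OF uP]]] sz2[OF uP yTy[OF uP]] by simp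
    qed
  qed
  have leaf: "\<forall>y\<in>verts T. degree T y = 1 \<longrightarrow> gdist T y (\<sigma>z y) \<le> 4"
  proof (intro ballI impI)
    fix v assume v: "v \<in> verts T" "degree T v = 1"
    have "Q v" using cover v by blast
    then show "gdist T v (\<sigma>z v) \<le> 4"
    proof (unfold Q_def, elim disjE bexE)
      assume vT: "v \<in> verts T'"
      have "v \<noteq> x" using v assms(4) unfolding degree_def by auto
      have "neighbors T v = neighbors T' v"
      proof (rule set_eqI)
        fix u
        show "u \<in> neighbors T v \<longleftrightarrow> u \<in> neighbors T' v"
        proof
          assume "u \<in> neighbors T v"
          then have u: "adj T v u" unfolding neighbors_def by auto
          then have uT: "u \<in> verts T'" using crossadj[OF vT] \<open>v \<noteq> x\<close> by blast
          then show "u \<in> neighbors T' v" using adjT'[OF vT uT] u unfolding neighbors_def by blast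
        next
          assume "u \<in> neighbors T' v"
          then have "u \<in> verts T'" "adj T' v u" unfolding neighbors_def by auto
          then show "u \<in> neighbors T v" using adjT'[OF vT] subT'(1) unfolding neighbors_def by blast
        qed
      qed
      then have "degree T' v = 1" using v unfolding degree_def by simp
      then have "gdist T' v (\<sigma> v) \<le> 4" using W(8) vT by blast
      then show ?thesis using gT'[OF vT smap[OF vT]] sz1[OF vT] by simp
    next
      fix y assume y: "y \<in> P" and vT: "v \<in> verts (Ty y)"
      show ?thesis
      proof (cases "v = y")
        case True
        have "gdist (Ty y) y (\<tau> y y) \<le> 2" using WT[OF y] by blast
        then show ?thesis using gTy[OF y yTy[OF y] tmap[OF y yTy[OF y]]] sz2[OF y vT] True by simp
      next
        case False
        have "neighbors T v = neighbors (Ty y) v"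
        proof (rule set_eqI)
          fix u
          show "u \<in> neighbors T v \<longleftrightarrow> u \<in> neighbors (Ty y) v"
          proof
            assume "u \<in> neighbors T v"
            then have u: "adj T v u" unfolding neighbors_def by auto
            then have uT: "u \<in> verts (Ty y)" using cls2[OF y vT u] False by blast
            then show "u \<in> neighbors (Ty y) v" using adjTy[OF y vT uT] u unfolding neighbors_def by blast
          next
            assume "u \<in> neighbors (Ty y) v"
            then have "u \<in> verts (Ty y)" "adj (Ty y) v u" unfolding neighbors_def by auto
            then show "u \<in> neighbors T v" using adjTy[OF y vT] subTy(1)[of y] unfolding neighbors_def by blast
          qed
        qed
        then have "degree (Ty y) v = 1" using v unfolding degree_def by simp
        then have "gdist (Ty y) v (\<tau> y v) \<le> 4" using WT[OF y] vT by blast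
        then show ?thesis using gTy[OF y vT tmap[OF y vT]] sz2[OF y vT] by simp
      qed
    qed
  qed
  have cyc: "\<forall>v\<in>verts T. \<exists>k\<in>{1..5}. (\<sigma>z ^^ k) v = v"
  proof
    fix v assume "v \<in> verts T"
    then have "Q v" using cover by blast
    then show "\<exists>k\<in>{1..5}. (\<sigma>z ^^ k) v = v"
    proof (unfold Q_def, elim disjE bexE)
      assume vT: "v \<in> verts T'"
      then obtain k where "k \<in> {1..5}" "(\<sigma> ^^ k) v = v" using W(9) by blast
      moreover have "(\<sigma>z ^^ k) v = (\<sigma> ^^ k) v" using funpow_agree[of "verts T'" \<sigma>z \<sigma> v k] sz1 smap vT by blast
      ultimately show ?thesis by metis
    next
      fix y assume y: "y \<in> P" and vT: "v \<in> verts (Ty y)"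
      then obtain k where "k \<in> {1..5}" "(\<tau> y ^^ k) v = v" using WT[OF y] by blast
      moreover have "(\<sigma>z ^^ k) v = (\<tau> y ^^ k) v" using funpow_agree[of "verts (Ty y)" \<sigma>z "\<tau> y" v k] sz2[OF y] tmap[OF y] vT by blast
      ultimately show ?thesis by metis
    qed
  qed
  have g2: "gdist T z (\<sigma>z z) \<le> 2" using W(6) gT'[OF assms(10) smap[OF assms(10)]] sz1[OF assms(10)] by simp
  have "two_placement T \<sigma>z" unfolding two_placement_def bij_betw_def using inj img place by blast
  then have "well_2_placement T z \<sigma>z"
    unfolding well_2_placement_def
    using assms(1,2) zT ff place nb leaf cyc g2 by blast
  then show ?thesis using sz1 by blast
qed

end
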